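(* Let $M$ be a Puiseux monoid and let $R$ be an integral domain. Suppose $f = \alpha_n X^{q_n} + \dots + \alpha_1 X^{q_1} + \alpha_0 \in R[M]$ is written in canonical form (so $q_n > \dots > q_1 > 0$ and all $\alpha_j \neq 0$). If there is a prime ideal $P$ of $R$ such that $\alpha_n \notin P$, $\alpha_j \in P$ for all $0 \le j < n$, and $\alpha_0 \notin P^2$, then $f$ cannot be written as a product $gh$ with $g,h \in R[M]\setminus R$.
   Context: A Puiseux monoid is an additive submonoid of $(\mathbb{Q}_{\ge 0},+)$. For a commutative ring $R$ and a Puiseux monoid $M$, $R[M]$ denotes the semigroup ring of $M$ over $R$ (finite formal sums $\sum_{s\in M} f(s)X^s$ with $X^sX^t=X^{s+t}$). A canonical form of a nonzero element is a representation $\sum_i \alpha_iX^{q_i}$ with all coefficients nonzero and pairwise distinct exponents listed in decreasing order. *)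

theory Defs
  imports Complex_Main "HOL-Library.Poly_Mapping"
begin

definition puiseux_monoid :: "rat set \<Rightarrow> bool" where
  "puiseux_monoid M \<longleftrightarrow> 0 \<in> M \<and> (\<forall>x\<in>M. 0 \<le> x) \<and> (\<forall>x\<in>M. \<forall>y\<in>M. x + y \<in> M)"

text \<open>The semigroup ring R[M], realised inside the ring of finitely supported
  functions from rat to 'a (multiplication is convolution): elements with support in M.\<close>
definition semigroup_ring :: "rat set \<Rightarrow> (rat \<Rightarrow>\<^sub>0 'a::zero) set" where
  "semigroup_ring M = {f. Poly_Mapping.keys f \<subseteq> M}"

text \<open>Elements of R, viewed inside R[M] (constants).\<close>
definition constants :: "(rat \<Rightarrow>\<^sub>0 'a::zero) set" where
  "constants = {f. Poly_Mapping.keys f \<subseteq> {0}}"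

definition is_ideal :: "'a::comm_ring_1 set \<Rightarrow> bool" where
  "is_ideal I \<longleftrightarrow> 0 \<in> I \<and> (\<forall>x\<in>I. \<forall>y\<in>I. x + y \<in> I) \<and> (\<forall>x\<in>I. \<forall>r. r * x \<in> I)"

definition prime_ideal :: "'a::comm_ring_1 set \<Rightarrow> bool" where
  "prime_ideal P \<longleftrightarrow> is_ideal P \<and> P \<noteq> UNIV \<and> (\<forall>a b. a * b \<in> P \<longrightarrow> a \<in> P \<or> b \<in> P)"

definition ideal_square :: "'a::comm_ring_1 set \<Rightarrow> 'a set" where
  "ideal_square P = {x. \<exists>(n::nat) a b. (\<forall>i<n. a i \<in> P \<and> b i \<in> P) \<and> x = (\<Sum>i<n. a i * b i)}"

end

theory Submission
  imports Defs
begin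
abbreviation "lk \<equiv> Poly_Mapping.lookup"
abbreviation "ks \<equiv> Poly_Mapping.keys"
lemma lookup_mult_fin:
  fixes g h :: "'b::comm_monoid_add \<Rightarrow>\<^sub>0 'a::comm_semiring_0"
  assumes "finite A" "finite B" "ks g \<subseteq> A" "ks h \<subseteq> B"
  shows "lk (g*h) k = (\<Sum>a\<in>A. \<Sum>b\<in>B. if a+b = k then lk g a * lk h b else 0)"
proof -
  have i: "(\<Sum>q. lk h q when k = l + q) = (\<Sum>b\<in>B. lk h b when k = l + b)" for l
    by (rule Sum_any.expand_superset) (use assms in \<open>auto simp: when_def in_keys_iff\<close>)
  have "lk (g*h) k = (\<Sum>l. lk g l * (\<Sum>b\<in>B. lk h b when k = l + b))"
    by (simp add: lookup_mult i)
  also have "\<dots> = (\<Sum>a\<in>A. lk g a * (\<Sum>b\<in>B. lk h b when k = a + b))"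
  proof (rule Sum_any.expand_superset)
    show "finite A" by fact
    show "{a. lk g a * (\<Sum>b\<in>B. lk h b when k = a + b) \<noteq> 0} \<subseteq> A"
    proof
      fix x assume "x \<in> {a. lk g a * (\<Sum>b\<in>B. lk h b when k = a + b) \<noteq> 0}"
      then have "lk g x \<noteq> 0" by auto
      then show "x \<in> A" using assms(3) by (auto simp: in_keys_iff)
    qed
  qed
  finally show ?thesis by (simp add: sum_distrib_left when_def) (auto intro!: sum.cong)
qed

lemma ideal_sum:
  assumes "is_ideal I" "\<forall>x\<in>S. F x \<in> I"
  shows "sum F S \<in> I"
proof (cases "finite S")
  case True
  then show ?thesis using assms(2)
    by (induction S rule: finite_induct) (use assms(1) in \<open>auto simp: is_ideal_def\<close>)
next
  case False
  then show ?thesis using assms(1) by (simp add: is_ideal_def)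
qed

lemma ideal_notin:
  fixes x y :: "'a::comm_ring_1"
  assumes "is_ideal I" "x - y \<in> I" "y \<notin> I"
  shows "x \<notin> I"
proof
  assume "x \<in> I"
  moreover have "(-1) * (x - y) \<in> I" using assms(1,2) unfolding is_ideal_def by blast
  ultimately have "x + (-1) * (x - y) \<in> I" using assms(1) unfolding is_ideal_def by blast
  moreover have "x + (-1) * (x - y) = y" by simp
  ultimately show False using assms(3) by metis
qed

lemma ideal_zero: "is_ideal {0::'a::comm_ring_1}"
  by (simp add: is_ideal_def)

lemma conv_iso:
  fixes g h :: "'b::comm_monoid_add \<Rightarrow>\<^sub>0 'a::comm_ring_1"
  assumes I: "is_ideal I" and fin: "finite A" "finite B" and ks: "ks g \<subseteq> A" "ks h \<subseteq> B"
    and a0: "a0 \<in> A" "b0 \<in> B" "a0 + b0 = k"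
    and oth: "\<forall>a\<in>A. \<forall>b\<in>B. a + b = k \<and> (a, b) \<noteq> (a0, b0) \<longrightarrow> lk g a * lk h b \<in> I"
  shows "lk (g*h) k - lk g a0 * lk h b0 \<in> I"
proof -
  let ?F = "\<lambda>(a,b). if a + b = k then lk g a * lk h b else 0"
  have "lk (g*h) k = sum ?F (A \<times> B)"
    by (simp add: lookup_mult_fin[OF fin ks] sum.cartesian_product)
  also have "\<dots> = ?F (a0,b0) + sum ?F (A \<times> B - {(a0,b0)})"
    by (rule sum.remove) (use fin a0 in auto)
  finally have e: "lk (g*h) k - lk g a0 * lk h b0 = sum ?F (A \<times> B - {(a0,b0)})"
    using a0 by simp
  have "\<forall>x\<in>A \<times> B - {(a0,b0)}. ?F x \<in> I"
  proof
    fix x assume x: "x \<in> A \<times> B - {(a0,b0)}"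
    obtain a b where [simp]: "x = (a,b)" by (cases x)
    show "?F x \<in> I" using x oth I by (auto simp: is_ideal_def)
  qed
  then have "sum ?F (A \<times> B - {(a0,b0)}) \<in> I"
    by (rule ideal_sum[OF I])
  then show ?thesis using e by simp
qed

theorem mainTheorem3:
  fixes M :: "rat set" and f :: "rat \<Rightarrow>\<^sub>0 'a::idom"
    and n :: nat and \<alpha> :: "nat \<Rightarrow> 'a" and q :: "nat \<Rightarrow> rat" and P :: "'a set"
  assumes "puiseux_monoid M"
    and "\<forall>j\<le>n. q j \<in> M"
    and "q 0 = 0"
    and "\<forall>i j. i < j \<and> j \<le> n \<longrightarrow> q i < q j"
    and "\<forall>j\<le>n. \<alpha> j \<noteq> 0"
    and "f = (\<Sum>j\<le>n. Poly_Mapping.single (q j) (\<alpha> j))"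
    and "prime_ideal P"
    and "\<alpha> n \<notin> P"
    and "\<forall>j<n. \<alpha> j \<in> P"
    and "\<alpha> 0 \<notin> ideal_square P"
  shows "\<not> (\<exists>g h. g \<in> semigroup_ring M - constants \<and> h \<in> semigroup_ring M - constants \<and> f = g * h)"
proof
  assume "\<exists>g h. g \<in> semigroup_ring M - constants \<and> h \<in> semigroup_ring M - constants \<and> f = g * h"
  then obtain g h where g: "g \<in> semigroup_ring M - constants" and h: "h \<in> semigroup_ring M - constants"
    and fgh: "f = g * h" by blast
  have Mnn: "x \<in> M \<Longrightarrow> 0 \<le> x" for x using assms(1) by (simp add: puiseux_monoid_def)
  have PI: "is_ideal P" and Pp: "\<And>a b. a * b \<in> P \<Longrightarrow> a \<in> P \<or> b \<in> P"
    using assms(7) by (auto simp: prime_ideal_def)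
  have P0: "0 \<in> P" using PI by (simp add: is_ideal_def)
  have Pmul: "x \<in> P \<Longrightarrow> r * x \<in> P" for x r using PI by (simp add: is_ideal_def)
  have qinj: "q i = q j \<longleftrightarrow> i = j" if "i \<le> n" "j \<le> n" for i j
    using assms(4) that by (metis less_irrefl linorder_neqE_nat)
  have qmono: "q j \<le> q n" if "j \<le> n" for j
    using assms(4) that by (metis le_less order.refl)
  have fl: "lk f k = (\<Sum>j\<le>n. if q j = k then \<alpha> j else 0)" for k
    by (simp add: assms(6) lookup_sum lookup_single when_def)
  have fq: "lk f (q j) = \<alpha> j" if "j \<le> n" for j
  proof -
    have "lk f (q j) = (\<Sum>i\<le>n. if i = j then \<alpha> i else 0)"
      unfolding fl by (rule sum.cong) (use qinj that in auto)
    then show ?thesis using that by simp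
  qed
  have fnot: "lk f k = 0" if "k \<notin> q ` {..n}" for k
    unfolding fl by (rule sum.neutral) (use that in auto)
  have keysf: "ks f \<subseteq> q ` {..n}" using fnot by (auto simp: in_keys_iff)
  have fP: "k = q n" if "lk f k \<notin> P" for k
  proof (cases "k \<in> q ` {..n}")
    case True
    then obtain j where j: "j \<le> n" "k = q j" by auto
    show ?thesis
    proof (cases "j < n")
      case True then show ?thesis using j fq assms(9) that by auto
    next
      case False then show ?thesis using j by auto
    qed
  next
    case False then show ?thesis using fnot that P0 by auto
  qed
  define Kg where "Kg = ks g"
  define Kh where "Kh = ks h"
  have finK: "finite Kg" "finite Kh" by (auto simp: Kg_def Kh_def)
  have KgM: "Kg \<subseteq> M" and KhM: "Kh \<subseteq> M" using g h by (auto simp: Kg_def Kh_def semigroup_ring_def)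
  obtain a1 where a1: "a1 \<in> Kg" "a1 \<noteq> 0" using g by (auto simp: Kg_def constants_def)
  obtain b1 where b1: "b1 \<in> Kh" "b1 \<noteq> 0" using h by (auto simp: Kh_def constants_def)
  have a1pos: "0 < a1" using a1 KgM Mnn by force
  have b1pos: "0 < b1" using b1 KhM Mnn by force
  define Sg where "Sg = {a\<in>Kg. lk g a \<notin> P}"
  define Sh where "Sh = {b\<in>Kh. lk h b \<notin> P}"
  have finS: "finite Sg" "finite Sh" using finK by (auto simp: Sg_def Sh_def)
  have fqn: "lk f (q n) \<notin> P" using fq assms(8) by simp
  have Sg_ne: "Sg \<noteq> {}"
  proof
    assume e: "Sg = {}"
    have "lk (g*h) (q n) = (\<Sum>a\<in>Kg. \<Sum>b\<in>Kh. if a+b = q n then lk g a * lk h b else 0)"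
      by (rule lookup_mult_fin) (auto simp: finK Kg_def Kh_def)
    also have "\<dots> \<in> P"
    proof (rule ideal_sum[OF PI], rule ballI, rule ideal_sum[OF PI], rule ballI)
      fix a b assume "a \<in> Kg" "b \<in> Kh"
      then have "lk g a \<in> P" using e by (auto simp: Sg_def)
      then show "(if a+b = q n then lk g a * lk h b else 0) \<in> P"
        using Pmul[of "lk g a" "lk h b"] P0 by (auto simp: mult.commute)
    qed
    finally show False using fqn fgh by simp
  qed
  have Sh_ne: "Sh \<noteq> {}"
  proof
    assume e: "Sh = {}"
    have "lk (g*h) (q n) = (\<Sum>a\<in>Kg. \<Sum>b\<in>Kh. if a+b = q n then lk g a * lk h b else 0)"
      by (rule lookup_mult_fin) (auto simp: finK Kg_def Kh_def)
    also have "\<dots> \<in> P"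
    proof (rule ideal_sum[OF PI], rule ballI, rule ideal_sum[OF PI], rule ballI)
      fix a b assume "a \<in> Kg" "b \<in> Kh"
      then have "lk h b \<in> P" using e by (auto simp: Sh_def)
      then show "(if a+b = q n then lk g a * lk h b else 0) \<in> P"
        using Pmul[of "lk h b" "lk g a"] P0 by auto
    qed
    finally show False using fqn fgh by simp
  qed
  define s where "s = Min Sg"
  define S where "S = Max Sg"
  define t where "t = Min Sh"
  define T where "T = Max Sh"
  have sS: "s \<in> Sg" "S \<in> Sg" "t \<in> Sh" "T \<in> Sh"
    using finS Sg_ne Sh_ne by (auto simp: s_def S_def t_def T_def)
  have sle: "\<And>a. a \<in> Sg \<Longrightarrow> s \<le> a" "\<And>a. a \<in> Sg \<Longrightarrow> a \<le> S"
    "\<And>b. b \<in> Sh \<Longrightarrow> t \<le> b" "\<And>b. b \<in> Sh \<Longrightarrow> b \<le> T"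
    using finS by (auto simp: s_def S_def t_def T_def)
  have gst: "lk g s * lk h t \<notin> P" "lk g S * lk h T \<notin> P"
    using sS Pp by (auto simp: Sg_def Sh_def)
  have st: "s + t = q n"
  proof (rule fP)
    have "lk (g*h) (s+t) - lk g s * lk h t \<in> P"
    proof (rule conv_iso[OF PI finK])
      show "ks g \<subseteq> Kg" "ks h \<subseteq> Kh" by (auto simp: Kg_def Kh_def)
      show "s \<in> Kg" "t \<in> Kh" "s + t = s + t" using sS by (auto simp: Sg_def Sh_def)
      show "\<forall>a\<in>Kg. \<forall>b\<in>Kh. a + b = s + t \<and> (a, b) \<noteq> (s, t) \<longrightarrow> lk g a * lk h b \<in> P"
      proof (intro ballI impI)
        fix a b assume ab: "a \<in> Kg" "b \<in> Kh" "a + b = s + t \<and> (a, b) \<noteq> (s, t)"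
        show "lk g a * lk h b \<in> P"
        proof (cases "a < s")
          case True
          then have "a \<notin> Sg" using sle(1) by force
          then have "lk g a \<in> P" using ab by (auto simp: Sg_def)
          then show ?thesis using Pmul[of "lk g a" "lk h b"] by (simp add: mult.commute)
        next
          case False
          then have "b < t" using ab by auto
          then have "b \<notin> Sh" using sle(3) by force
          then have "lk h b \<in> P" using ab by (auto simp: Sh_def)
          then show ?thesis using Pmul by simp
        qed
      qed
    qed
    then show "lk f (s + t) \<notin> P" using ideal_notin[OF PI _ gst(1)] fgh by simp
  qed
  have ST: "S + T = q n"
  proof (rule fP)
    have "lk (g*h) (S+T) - lk g S * lk h T \<in> P"
    proof (rule conv_iso[OF PI finK])
      show "ks g \<subseteq> Kg" "ks h \<subseteq> Kh" by (auto simp: Kg_def Kh_def)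
      show "S \<in> Kg" "T \<in> Kh" "S + T = S + T" using sS by (auto simp: Sg_def Sh_def)
      show "\<forall>a\<in>Kg. \<forall>b\<in>Kh. a + b = S + T \<and> (a, b) \<noteq> (S, T) \<longrightarrow> lk g a * lk h b \<in> P"
      proof (intro ballI impI)
        fix a b assume ab: "a \<in> Kg" "b \<in> Kh" "a + b = S + T \<and> (a, b) \<noteq> (S, T)"
        show "lk g a * lk h b \<in> P"
        proof (cases "a > S")
          case True
          then have "a \<notin> Sg" using sle(2) by force
          then have "lk g a \<in> P" using ab by (auto simp: Sg_def)
          then show ?thesis using Pmul[of "lk g a" "lk h b"] by (simp add: mult.commute)
        next
          case False
          then have "b > T" using ab by auto
          then have "b \<notin> Sh" using sle(4) by force
          then have "lk h b \<in> P" using ab by (auto simp: Sh_def)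
          then show ?thesis using Pmul by simp
        qed
      qed
    qed
    then show "lk f (S + T) \<notin> P" using ideal_notin[OF PI _ gst(2)] fgh by simp
  qed
  define D where "D = Max Kg"
  define E where "E = Max Kh"
  have DE: "D \<in> Kg" "E \<in> Kh" unfolding D_def E_def using finK a1(1) b1(1) by (auto intro!: Max_in)
  have Dle: "\<And>a. a \<in> Kg \<Longrightarrow> a \<le> D" "\<And>b. b \<in> Kh \<Longrightarrow> b \<le> E"
    using finK by (auto simp: D_def E_def)
  have gDE: "lk g D * lk h E \<notin> {0}" using DE by (auto simp: Kg_def Kh_def in_keys_iff)
  have "lk (g*h) (D+E) - lk g D * lk h E \<in> {0}"
  proof (rule conv_iso[OF ideal_zero finK])
    show "ks g \<subseteq> Kg" "ks h \<subseteq> Kh" by (auto simp: Kg_def Kh_def)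
    show "D \<in> Kg" "E \<in> Kh" "D + E = D + E" using DE by auto
    show "\<forall>a\<in>Kg. \<forall>b\<in>Kh. a + b = D + E \<and> (a, b) \<noteq> (D, E) \<longrightarrow> lk g a * lk h b \<in> {0}"
      using Dle by fastforce
  qed
  then have "lk f (D+E) \<notin> {0}" using ideal_notin[OF ideal_zero _ gDE] fgh by simp
  then have "D + E \<in> q ` {..n}" using keysf by (auto simp: in_keys_iff)
  then have DEq: "D + E \<le> q n" using qmono by auto
  have "S \<le> D" "T \<le> E" using sS Dle by (auto simp: Sg_def Sh_def)
  moreover have "s \<le> S" "t \<le> T" using sS sle by auto
  moreover have "a1 \<le> D" "b1 \<le> E" using a1 b1 Dle by auto
  ultimately have spos: "0 < s" and tpos: "0 < t" using st ST DEq a1pos b1pos by linarith+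
  have g0: "lk g 0 \<in> P"
  proof (rule ccontr)
    assume "lk g 0 \<notin> P"
    then have "0 \<in> Sg" using P0 by (auto simp: Sg_def Kg_def in_keys_iff)
    then show False using sle(1) spos by force
  qed
  have h0: "lk h 0 \<in> P"
  proof (rule ccontr)
    assume "lk h 0 \<notin> P"
    then have "0 \<in> Sh" using P0 by (auto simp: Sh_def Kh_def in_keys_iff)
    then show False using sle(3) tpos by force
  qed
  have "lk (g*h) 0 - lk g 0 * lk h 0 \<in> {0}"
  proof (rule conv_iso[OF ideal_zero])
    show "finite (insert 0 Kg)" "finite (insert 0 Kh)" using finK by auto
    show "ks g \<subseteq> insert 0 Kg" "ks h \<subseteq> insert 0 Kh" by (auto simp: Kg_def Kh_def)
    show "(0::rat) \<in> insert 0 Kg" "(0::rat) \<in> insert 0 Kh" "(0::rat) + 0 = 0" by auto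
    show "\<forall>a\<in>insert 0 Kg. \<forall>b\<in>insert 0 Kh. a + b = 0 \<and> (a, b) \<noteq> (0, 0) \<longrightarrow> lk g a * lk h b \<in> {0}"
    proof (intro ballI impI)
      fix a b assume ab: "a \<in> insert 0 Kg" "b \<in> insert 0 Kh" "a + b = 0 \<and> (a, b) \<noteq> (0, 0)"
      have "0 \<le> a" "0 \<le> b" using ab(1,2) KgM KhM Mnn by auto
      then show "lk g a * lk h b \<in> {0}" using ab(3) by auto
    qed
  qed
  then have "\<alpha> 0 = lk g 0 * lk h 0" using fq[of 0] assms(3) fgh by simp
  then have "\<alpha> 0 \<in> ideal_square P"
    unfolding ideal_square_def
    by (intro CollectI exI[of _ "1::nat"] exI[of _ "\<lambda>_. lk g 0"] exI[of _ "\<lambda>_. lk h 0"]) (use g0 h0 in auto)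
  then show False using assms(10) by simp
qed

end
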